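(* The group $\mathrm{Sym}(\mathbb{Z})\rtimes\mathbb{Z}$ does not have Shalom's property $H_{\mathrm{FD}}$.
   Context: $\mathrm{Sym}(\mathbb{Z})$ is the group of finitely supported permutations of $\mathbb{Z}$, and $\mathbb{Z}$ acts on it by conjugation by the shift $x\mapsto x+1$; the group is generated by the shift and the transposition of $0$ and $1$. A finitely generated group has property $H_{\mathrm{FD}}$ if every unitary representation with nonzero first reduced cohomology (1-cocycles modulo the closure, for pointwise convergence, of 1-coboundaries) admits a nonzero finite-dimensional subrepresentation. *)

theory Defs
  imports "HOL-Algebra.Group" Complex_Main
begin

definition fin_perm_Z :: "(int \<Rightarrow> int) set" where
  "fin_perm_Z = {\<sigma>. bij \<sigma> \<and> finite {x. \<sigma> x \<noteq> x}}"

text \<open>Action of n in Z by conjugation with the n-th power of the shift s(x) = x+1: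
  s^n o sigma o s^(-n).\<close>
definition shift_conj :: "int \<Rightarrow> (int \<Rightarrow> int) \<Rightarrow> (int \<Rightarrow> int)" where
  "shift_conj n \<sigma> = (\<lambda>x. \<sigma> (x - n) + n)"

definition SymZ_rtimes_Z :: "((int \<Rightarrow> int) \<times> int) monoid" where
  "SymZ_rtimes_Z =
     \<lparr> carrier = fin_perm_Z \<times> UNIV,
       mult = (\<lambda>(\<sigma>, m) (\<tau>, n). (\<sigma> \<circ> shift_conj m \<tau>, m + n)),
       one = (id, 0) \<rparr>"

definition l2 :: "(nat \<Rightarrow> complex) set" where
  "l2 = {x. summable (\<lambda>n. (cmod (x n))\<^sup>2)}"

definition l2_inner :: "(nat \<Rightarrow> complex) \<Rightarrow> (nat \<Rightarrow> complex) \<Rightarrow> complex" where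
  "l2_inner x y = (\<Sum>n. x n * cnj (y n))"

definition l2_norm :: "(nat \<Rightarrow> complex) \<Rightarrow> real" where
  "l2_norm x = sqrt (\<Sum>n. (cmod (x n))\<^sup>2)"

definition unitary_op :: "((nat \<Rightarrow> complex) \<Rightarrow> (nat \<Rightarrow> complex)) \<Rightarrow> bool" where
  "unitary_op U \<longleftrightarrow>
     U ` l2 = l2 \<and>
     (\<forall>x\<in>l2. \<forall>y\<in>l2. \<forall>c::complex. U (\<lambda>n. c * x n + y n) = (\<lambda>n. c * U x n + U y n)) \<and>
     (\<forall>x\<in>l2. \<forall>y\<in>l2. l2_inner (U x) (U y) = l2_inner x y)"

definition unitary_rep :: "('g, 'b) monoid_scheme \<Rightarrow> ('g \<Rightarrow> (nat \<Rightarrow> complex) \<Rightarrow> (nat \<Rightarrow> complex)) \<Rightarrow> bool" where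
  "unitary_rep G \<pi> \<longleftrightarrow>
     (\<forall>g\<in>carrier G. unitary_op (\<pi> g)) \<and>
     (\<forall>g\<in>carrier G. \<forall>h\<in>carrier G. \<forall>x\<in>l2. \<pi> (g \<otimes>\<^bsub>G\<^esub> h) x = \<pi> g (\<pi> h x)) \<and>
     (\<forall>x\<in>l2. \<pi> \<one>\<^bsub>G\<^esub> x = x)"

definition cocycle :: "('g, 'b) monoid_scheme \<Rightarrow> ('g \<Rightarrow> (nat \<Rightarrow> complex) \<Rightarrow> (nat \<Rightarrow> complex)) \<Rightarrow> ('g \<Rightarrow> nat \<Rightarrow> complex) \<Rightarrow> bool" where
  "cocycle G \<pi> b \<longleftrightarrow>
     (\<forall>g\<in>carrier G. b g \<in> l2) \<and>
     (\<forall>g\<in>carrier G. \<forall>h\<in>carrier G. b (g \<otimes>\<^bsub>G\<^esub> h) = (\<lambda>n. b g n + \<pi> g (b h) n))"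

definition coboundary :: "('g \<Rightarrow> (nat \<Rightarrow> complex) \<Rightarrow> (nat \<Rightarrow> complex)) \<Rightarrow> (nat \<Rightarrow> complex) \<Rightarrow> 'g \<Rightarrow> nat \<Rightarrow> complex" where
  "coboundary \<pi> v g = (\<lambda>n. \<pi> g v n - v n)"

text \<open>b lies in the closure of the coboundaries for the topology of pointwise convergence
  on G (basic neighbourhoods: finitely many group elements, norm-ball of radius eps).\<close>
definition in_closure_coboundaries :: "('g, 'b) monoid_scheme \<Rightarrow> ('g \<Rightarrow> (nat \<Rightarrow> complex) \<Rightarrow> (nat \<Rightarrow> complex)) \<Rightarrow> ('g \<Rightarrow> nat \<Rightarrow> complex) \<Rightarrow> bool" where
  "in_closure_coboundaries G \<pi> b \<longleftrightarrow>
     (\<forall>F (\<epsilon>::real). finite F \<and> F \<subseteq> carrier G \<and> \<epsilon> > 0 \<longrightarrow>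
        (\<exists>v\<in>l2. \<forall>g\<in>F. l2_norm (\<lambda>n. b g n - coboundary \<pi> v g n) < \<epsilon>))"

definition reduced_H1_nonzero :: "('g, 'b) monoid_scheme \<Rightarrow> ('g \<Rightarrow> (nat \<Rightarrow> complex) \<Rightarrow> (nat \<Rightarrow> complex)) \<Rightarrow> bool" where
  "reduced_H1_nonzero G \<pi> \<longleftrightarrow> (\<exists>b. cocycle G \<pi> b \<and> \<not> in_closure_coboundaries G \<pi> b)"

definition cspan :: "(nat \<Rightarrow> complex) set \<Rightarrow> (nat \<Rightarrow> complex) set" where
  "cspan S = {x. \<exists>c :: (nat \<Rightarrow> complex) \<Rightarrow> complex. x = (\<lambda>n. \<Sum>s\<in>S. c s * s n)}"

definition has_fd_subrep :: "('g, 'b) monoid_scheme \<Rightarrow> ('g \<Rightarrow> (nat \<Rightarrow> complex) \<Rightarrow> (nat \<Rightarrow> complex)) \<Rightarrow> bool" where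
  "has_fd_subrep G \<pi> \<longleftrightarrow>
     (\<exists>S. finite S \<and> S \<subseteq> l2 \<and> (\<exists>s\<in>S. s \<noteq> (\<lambda>n. 0)) \<and>
          (\<forall>g\<in>carrier G. \<forall>x\<in>cspan S. \<pi> g x \<in> cspan S))"

text \<open>Property H_FD, tested on unitary representations on the separable Hilbert space l2(N).\<close>
definition has_HFD_l2 :: "('g, 'b) monoid_scheme \<Rightarrow> bool" where
  "has_HFD_l2 G \<longleftrightarrow>
     (\<forall>\<pi>. unitary_rep G \<pi> \<and> reduced_H1_nonzero G \<pi> \<longrightarrow> has_fd_subrep G \<pi>)"

end

theory Submission
  imports Defs "HOL-Analysis.Infinite_Sum" "HOL-Library.Nat_Bijection" "HOL-Library.Function_Algebras"
begin


lemma reindex_norm_summable: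
  fixes f :: "nat \<Rightarrow> 'a::banach"
  assumes P: "bij P" and s: "summable (\<lambda>n. norm (f n))"
  shows "summable (\<lambda>n. norm (f (P n)))"
proof -
  have "(\<lambda>n. norm (f n)) summable_on UNIV"
    using summable_on_UNIV_nonneg_real_iff[of "\<lambda>n. norm (f n)"] s by simp
  hence "(\<lambda>n. norm (f (P n))) summable_on UNIV"
    using summable_on_reindex_bij_betw[OF P, of "\<lambda>n. norm (f n)"] by simp
  thus ?thesis using summable_on_UNIV_nonneg_real_iff[of "\<lambda>n. norm (f (P n))"] by simp
qed

lemma reindex_suminf:
  fixes f :: "nat \<Rightarrow> 'a::banach"
  assumes P: "bij P" and s: "summable (\<lambda>n. norm (f n))"
  shows "suminf (\<lambda>n. f (P n)) = suminf f"
proof -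
  have s2: "summable (\<lambda>n. norm (f (P n)))" by (rule reindex_norm_summable[OF P s])
  have h1: "(f has_sum suminf f) UNIV"
    by (rule norm_summable_imp_has_sum[OF s summable_sums[OF summable_norm_cancel[OF s]]])
  have h2: "((\<lambda>n. f (P n)) has_sum suminf (\<lambda>n. f (P n))) UNIV"
    by (rule norm_summable_imp_has_sum[OF s2 summable_sums[OF summable_norm_cancel[OF s2]]])
  have "infsum (\<lambda>n. f (P n)) UNIV = infsum f UNIV"
    by (rule infsum_reindex_bij_betw[OF P])
  moreover have "infsum f UNIV = suminf f" by (rule infsumI[OF h1])
  moreover have "infsum (\<lambda>n. f (P n)) UNIV = suminf (\<lambda>n. f (P n))" by (rule infsumI[OF h2])
  ultimately show ?thesis by simp
qed



lemma G_carrier: "carrier SymZ_rtimes_Z = fin_perm_Z \<times> UNIV"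
  by (simp add: SymZ_rtimes_Z_def)

lemma G_mult: "(\<sigma>, m) \<otimes>\<^bsub>SymZ_rtimes_Z\<^esub> (\<tau>, n) = (\<sigma> \<circ> shift_conj m \<tau>, m + n)"
  by (simp add: SymZ_rtimes_Z_def)

lemma G_one: "\<one>\<^bsub>SymZ_rtimes_Z\<^esub> = (id, 0)"
  by (simp add: SymZ_rtimes_Z_def)

definition ainv :: "(int \<Rightarrow> int) \<times> int \<Rightarrow> int \<Rightarrow> int" where
  "ainv g y = Hilbert_Choice.inv (fst g) y - snd g"

lemma inv_shift_conj:
  assumes "bij \<tau>"
  shows "Hilbert_Choice.inv (shift_conj m \<tau>) y = Hilbert_Choice.inv \<tau> (y - m) + m"
proof -
  have inj: "inj (shift_conj m \<tau>)"
    unfolding inj_def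
  proof (intro allI impI)
    fix x y assume "shift_conj m \<tau> x = shift_conj m \<tau> y"
    hence "\<tau> (x - m) = \<tau> (y - m)" by (simp add: shift_conj_def)
    hence "x - m = y - m" using assms by (simp add: bij_def inj_eq)
    thus "x = y" by simp
  qed
  have "shift_conj m \<tau> (Hilbert_Choice.inv \<tau> (y - m) + m) = y"
    using assms unfolding shift_conj_def by (simp add: bij_is_surj surj_f_inv_f)
  thus ?thesis using inj by (simp add: inv_f_eq)
qed

lemma bij_shift_conj:
  assumes "bij \<tau>"
  shows "bij (shift_conj m \<tau>)"
proof -
  have "shift_conj m \<tau> = (\<lambda>x. x + m) \<circ> \<tau> \<circ> (\<lambda>x. x - m)"
    by (auto simp: shift_conj_def)
  moreover have "bij (\<lambda>x::int. x + m)"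
    by (rule o_bij[where g="\<lambda>x. x - m"]) auto
  moreover have "bij (\<lambda>x::int. x - m)"
    by (rule o_bij[where g="\<lambda>x. x + m"]) auto
  ultimately show ?thesis using assms by (simp add: bij_comp)
qed

lemma ainv_mult:
  assumes "g \<in> carrier SymZ_rtimes_Z" "h \<in> carrier SymZ_rtimes_Z"
  shows "ainv (g \<otimes>\<^bsub>SymZ_rtimes_Z\<^esub> h) y = ainv h (ainv g y)"
proof -
  obtain \<sigma> m where g: "g = (\<sigma>, m)" by (cases g)
  obtain \<tau> n where h: "h = (\<tau>, n)" by (cases h)
  have b1: "bij \<sigma>" and b2: "bij \<tau>" using assms g h by (auto simp: G_carrier fin_perm_Z_def)
  have "Hilbert_Choice.inv (\<sigma> \<circ> shift_conj m \<tau>) = Hilbert_Choice.inv (shift_conj m \<tau>) \<circ> Hilbert_Choice.inv \<sigma>"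
    by (rule o_inv_distrib[OF b1 bij_shift_conj[OF b2]])
  thus ?thesis using g h by (simp add: G_mult ainv_def inv_shift_conj[OF b2])
qed

lemma ainv_one: "ainv (\<one>\<^bsub>SymZ_rtimes_Z\<^esub>) y = y"
  by (simp add: G_one ainv_def inv_id)

definition Pm :: "(int \<Rightarrow> int) \<times> int \<Rightarrow> nat \<Rightarrow> nat" where
  "Pm g n = int_encode (ainv g (int_decode n))"

lemma bij_Pm:
  assumes "g \<in> carrier SymZ_rtimes_Z"
  shows "bij (Pm g)"
proof -
  obtain \<sigma> m where g: "g = (\<sigma>, m)" by (cases g)
  have b1: "bij \<sigma>" using assms g by (auto simp: G_carrier fin_perm_Z_def)
  have bi: "bij (Hilbert_Choice.inv \<sigma>)" using b1 by (simp add: bij_imp_bij_inv)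
  have "bij (\<lambda>x::int. x - m)"
    by (rule o_bij[where g="\<lambda>x. x + m"]) auto
  hence "bij ((\<lambda>x. x - m) \<circ> Hilbert_Choice.inv \<sigma>)" using bi by (simp add: bij_comp)
  hence "bij (int_encode \<circ> ((\<lambda>x. x - m) \<circ> Hilbert_Choice.inv \<sigma>) \<circ> int_decode)"
    using bij_int_encode bij_int_decode by (simp add: bij_comp)
  moreover have "Pm g = int_encode \<circ> ((\<lambda>x. x - m) \<circ> Hilbert_Choice.inv \<sigma>) \<circ> int_decode"
    by (auto simp: Pm_def ainv_def g)
  ultimately show ?thesis by simp
qed

lemma Pm_mult:
  assumes "g \<in> carrier SymZ_rtimes_Z" "h \<in> carrier SymZ_rtimes_Z"
  shows "Pm (g \<otimes>\<^bsub>SymZ_rtimes_Z\<^esub> h) n = Pm h (Pm g n)"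
  using assms by (simp add: Pm_def ainv_mult)

lemma Pm_one: "Pm (\<one>\<^bsub>SymZ_rtimes_Z\<^esub>) n = n"
  by (simp add: Pm_def ainv_one)



definition rep :: "(int \<Rightarrow> int) \<times> int \<Rightarrow> (nat \<Rightarrow> complex) \<Rightarrow> (nat \<Rightarrow> complex)" where
  "rep g x = (\<lambda>n. x (Pm g n))"

lemma l2_reindex:
  assumes P: "bij P" and x: "x \<in> l2"
  shows "(\<lambda>n. x (P n)) \<in> l2"
proof -
  have "summable (\<lambda>n. norm ((cmod (x n))\<^sup>2))" using x by (simp add: l2_def)
  hence "summable (\<lambda>n. norm ((cmod (x (P n)))\<^sup>2))" by (rule reindex_norm_summable[OF P])
  thus ?thesis by (simp add: l2_def)
qed

lemma l2_prod_summable: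
  assumes x: "x \<in> l2" and y: "y \<in> l2"
  shows "summable (\<lambda>n. norm (x n * cnj (y n)))"
proof (rule summable_comparison_test)
  show "summable (\<lambda>n. (cmod (x n))\<^sup>2 + (cmod (y n))\<^sup>2)"
    using x y by (simp add: l2_def summable_add)
  show "\<exists>N. \<forall>n\<ge>N. norm (norm (x n * cnj (y n))) \<le> (cmod (x n))\<^sup>2 + (cmod (y n))\<^sup>2"
  proof (intro exI allI impI)
    fix n :: nat
    define a where "a = cmod (x n)"
    define b where "b = cmod (y n)"
    have "0 \<le> (a - b)\<^sup>2" by simp
    hence h: "2 * (a * b) \<le> a\<^sup>2 + b\<^sup>2" by (simp add: power2_diff)
    have "0 \<le> a * b" by (simp add: a_def b_def)
    hence "a * b \<le> a\<^sup>2 + b\<^sup>2" using h by linarith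
    hence "cmod (x n) * cmod (y n) \<le> (cmod (x n))\<^sup>2 + (cmod (y n))\<^sup>2" by (simp add: a_def b_def)
    thus "norm (norm (x n * cnj (y n))) \<le> (cmod (x n))\<^sup>2 + (cmod (y n))\<^sup>2"
      by (simp add: norm_mult)
  qed
qed

lemma unitary_reindex:
  assumes P: "bij P"
  shows "unitary_op (\<lambda>x n. x (P n))"
  unfolding unitary_op_def
proof (intro conjI)
  show "(\<lambda>x n. x (P n)) ` l2 = l2"
  proof
    show "(\<lambda>x n. x (P n)) ` l2 \<subseteq> l2" by (auto intro: l2_reindex[OF P])
    show "l2 \<subseteq> (\<lambda>x n. x (P n)) ` l2"
    proof
      fix y assume y: "y \<in> l2"
      have Pi: "bij (Hilbert_Choice.inv P)" using P by (simp add: bij_imp_bij_inv)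
      have z: "(\<lambda>n. y (Hilbert_Choice.inv P n)) \<in> l2" by (rule l2_reindex[OF Pi y])
      have "y = (\<lambda>n. (\<lambda>n. y (Hilbert_Choice.inv P n)) (P n))"
        using P by (simp add: bij_is_inj inv_f_f)
      thus "y \<in> (\<lambda>x n. x (P n)) ` l2" using z by (rule image_eqI)
    qed
  qed
  show "\<forall>x\<in>l2. \<forall>y\<in>l2. \<forall>c. (\<lambda>n. (\<lambda>n. c * x n + y n) (P n)) = (\<lambda>n. c * x (P n) + y (P n))"
    by simp
  show "\<forall>x\<in>l2. \<forall>y\<in>l2. l2_inner (\<lambda>n. x (P n)) (\<lambda>n. y (P n)) = l2_inner x y"
  proof (intro ballI)
    fix x y assume x: "x \<in> l2" and y: "y \<in> l2"
    show "l2_inner (\<lambda>n. x (P n)) (\<lambda>n. y (P n)) = l2_inner x y"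
      unfolding l2_inner_def
      using reindex_suminf[OF P l2_prod_summable[OF x y]] by simp
  qed
qed



lemma unitary_rep_rep: "unitary_rep SymZ_rtimes_Z rep"
  unfolding unitary_rep_def
proof (intro conjI ballI)
  fix g assume g: "g \<in> carrier SymZ_rtimes_Z"
  show "unitary_op (rep g)"
    using unitary_reindex[OF bij_Pm[OF g]] by (simp add: rep_def[abs_def])
next
  fix g h x assume g: "g \<in> carrier SymZ_rtimes_Z" and h: "h \<in> carrier SymZ_rtimes_Z"
  show "rep (g \<otimes>\<^bsub>SymZ_rtimes_Z\<^esub> h) x = rep g (rep h x)"
    by (simp add: rep_def Pm_mult[OF g h])
next
  fix x show "rep \<one>\<^bsub>SymZ_rtimes_Z\<^esub> x = x"
    by (simp add: rep_def Pm_one)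
qed

definition zeta :: "int \<Rightarrow> int" where
  "zeta x = (if x \<ge> 1 then x - 1 else x)"

definition bco :: "(int \<Rightarrow> int) \<times> int \<Rightarrow> nat \<Rightarrow> complex" where
  "bco g n = of_int (zeta (ainv g (int_decode n)) - zeta (int_decode n) + snd g)"

lemma bco_l2:
  assumes g: "g \<in> carrier SymZ_rtimes_Z"
  shows "bco g \<in> l2"
proof -
  obtain \<sigma> m where gg: "g = (\<sigma>, m)" by (cases g)
  have b1: "bij \<sigma>" and fin: "finite {x. \<sigma> x \<noteq> x}"
    using g gg by (auto simp: G_carrier fin_perm_Z_def)
  define A where "A = {x. \<sigma> x \<noteq> x} \<union> {x. \<bar>x\<bar> \<le> \<bar>m\<bar>}"
  have "{x. \<bar>x\<bar> \<le> \<bar>m\<bar>} = {-\<bar>m\<bar>..\<bar>m\<bar>}" by auto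
  hence finA: "finite A" unfolding A_def using fin by simp
  have "(cmod (bco g n))\<^sup>2 = 0" if n: "n \<notin> int_encode ` A" for n
  proof -
    define x where "x = int_decode n"
    have xA: "x \<notin> A" using n unfolding x_def by (metis image_eqI int_decode_inverse)
    hence "\<sigma> x = x" unfolding A_def by auto
    hence "Hilbert_Choice.inv \<sigma> x = x" using b1 by (simp add: bij_is_inj inv_f_eq)
    moreover have "\<bar>x\<bar> > \<bar>m\<bar>" using xA unfolding A_def by auto
    ultimately have "zeta (ainv g x) - zeta x + m = 0"
      by (auto simp: ainv_def gg zeta_def)
    thus ?thesis by (simp add: bco_def x_def gg)
  qed
  hence "summable (\<lambda>n. (cmod (bco g n))\<^sup>2)"
    using finA by (intro summable_finite[of "int_encode ` A"]) auto
  thus ?thesis by (simp add: l2_def)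
qed

lemma snd_mult: "snd (g \<otimes>\<^bsub>SymZ_rtimes_Z\<^esub> h) = snd g + snd h"
  by (cases g, cases h) (simp add: G_mult)

lemma bco_cocycle: "cocycle SymZ_rtimes_Z rep bco"
  unfolding cocycle_def
proof (intro conjI ballI)
  fix g assume "g \<in> carrier SymZ_rtimes_Z" thus "bco g \<in> l2" by (rule bco_l2)
next
  fix g h assume g: "g \<in> carrier SymZ_rtimes_Z" and h: "h \<in> carrier SymZ_rtimes_Z"
  obtain \<sigma> m where gg: "g = (\<sigma>, m)" by (cases g)
  obtain \<tau> k where hh: "h = (\<tau>, k)" by (cases h)
  show "bco (g \<otimes>\<^bsub>SymZ_rtimes_Z\<^esub> h) = (\<lambda>n. bco g n + rep g (bco h) n)"
  proof
    fix n
    show "bco (g \<otimes>\<^bsub>SymZ_rtimes_Z\<^esub> h) n = bco g n + rep g (bco h) n"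
      by (simp add: bco_def rep_def Pm_def ainv_mult[OF g h] snd_mult)
  qed
qed



definition sw :: "int \<Rightarrow> int \<Rightarrow> int \<Rightarrow> int" where
  "sw a b x = (if x = a then b else if x = b then a else x)"

lemma sw_sw: "sw a b (sw a b x) = x" by (simp add: sw_def)

lemma bij_sw: "bij (sw a b)"
  by (rule o_bij[where g="sw a b"]) (auto simp: sw_sw)

lemma inv_sw: "Hilbert_Choice.inv (sw a b) y = sw a b y"
  by (rule inv_f_eq[OF bij_is_inj[OF bij_sw]]) (simp add: sw_sw)

lemma sw_carrier: "(sw a b, m) \<in> carrier SymZ_rtimes_Z"
proof -
  have "{x. sw a b x \<noteq> x} \<subseteq> {a, b}" by (auto simp: sw_def)
  hence "finite {x. sw a b x \<noteq> x}" by (rule finite_subset) simp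
  thus ?thesis using bij_sw by (simp add: G_carrier fin_perm_Z_def)
qed

lemma l2_diff:
  assumes x: "x \<in> l2" and y: "y \<in> l2"
  shows "(\<lambda>n. x n - y n) \<in> l2"
proof -
  have sm: "summable (\<lambda>n. 2 * (cmod (x n))\<^sup>2 + 2 * (cmod (y n))\<^sup>2)"
    using x y by (simp add: l2_def summable_add summable_mult)
  moreover have b: "(cmod (x n - y n))\<^sup>2 \<le> 2 * (cmod (x n))\<^sup>2 + 2 * (cmod (y n))\<^sup>2" for n
  proof -
    define a where "a = cmod (x n)"
    define b where "b = cmod (y n)"
    have t: "cmod (x n - y n) \<le> a + b" unfolding a_def b_def by (rule norm_triangle_ineq4)
    have "0 \<le> cmod (x n - y n)" by simp
    hence "(cmod (x n - y n))\<^sup>2 \<le> (a + b)\<^sup>2" using t by (simp add: power_mono)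
    moreover have "0 \<le> (a - b)\<^sup>2" by simp
    hence "(a + b)\<^sup>2 \<le> 2 * a\<^sup>2 + 2 * b\<^sup>2" by (simp add: power2_sum power2_diff)
    ultimately show ?thesis unfolding a_def b_def by linarith
  qed
  have "summable (\<lambda>n. (cmod (x n - y n))\<^sup>2)"
  proof (rule summable_comparison_test'[OF sm, where N=0])
    fix n :: nat
    show "norm ((cmod (x n - y n))\<^sup>2) \<le> 2 * (cmod (x n))\<^sup>2 + 2 * (cmod (y n))\<^sup>2"
      using b[of n] by simp
  qed
  thus ?thesis by (simp add: l2_def)
qed

lemma not_closure: "\<not> in_closure_coboundaries SymZ_rtimes_Z rep bco"
proof
  assume H: "in_closure_coboundaries SymZ_rtimes_Z rep bco"
  define h0 where "h0 = (sw 0 1, (1::int))"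
  have h0c: "h0 \<in> carrier SymZ_rtimes_Z" unfolding h0_def by (rule sw_carrier)
  have pre: "finite {h0} \<and> {h0} \<subseteq> carrier SymZ_rtimes_Z \<and> (1::real) > 0" using h0c by simp
  have "\<exists>v\<in>l2. \<forall>g\<in>{h0}. l2_norm (\<lambda>n. bco g n - coboundary rep v g n) < 1"
    using H unfolding in_closure_coboundaries_def using pre by blast
  then obtain v where v: "v \<in> l2"
    and lt: "l2_norm (\<lambda>n. bco h0 n - coboundary rep v h0 n) < 1" by auto
  define n0 where "n0 = int_encode 0"
  have Pn0: "Pm h0 n0 = n0" by (simp add: Pm_def ainv_def h0_def n0_def inv_sw sw_def)
  define d where "d = (\<lambda>n. bco h0 n - coboundary rep v h0 n)"
  have d0: "d n0 = 1"
    by (simp add: d_def coboundary_def rep_def Pn0 bco_def Pm_def[symmetric])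
       (simp add: n0_def h0_def ainv_def inv_sw sw_def)
  have "rep h0 v \<in> l2" unfolding rep_def by (rule l2_reindex[OF bij_Pm[OF h0c] v])
  hence "coboundary rep v h0 \<in> l2" using v unfolding coboundary_def by (simp add: l2_diff)
  hence dl2: "d \<in> l2" unfolding d_def using bco_l2[OF h0c] by (simp add: l2_diff)
  hence s: "summable (\<lambda>n. (cmod (d n))\<^sup>2)" by (simp add: l2_def)
  have "(\<Sum>n\<in>{n0}. (cmod (d n))\<^sup>2) \<le> (\<Sum>n. (cmod (d n))\<^sup>2)"
    by (rule sum_le_suminf[OF s]) auto
  hence "1 \<le> (\<Sum>n. (cmod (d n))\<^sup>2)" using d0 by simp
  hence "1 \<le> l2_norm d" unfolding l2_norm_def by simp
  thus False using lt unfolding d_def by simp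
qed



definition cscale :: "complex \<Rightarrow> (nat \<Rightarrow> complex) \<Rightarrow> (nat \<Rightarrow> complex)" where
  "cscale c x = (\<lambda>n. c * x n)"

interpretation cvs: vector_space cscale
  by unfold_locales (auto simp: cscale_def plus_fun_def ring_distribs)

lemma sum_fun_apply: "(sum F A) n = (\<Sum>a\<in>A. F a n)"
  for F :: "'a \<Rightarrow> nat \<Rightarrow> complex"
  by (induct A rule: infinite_finite_induct) (auto simp: plus_fun_def zero_fun_def)

lemma cspan_sub_span:
  assumes "x \<in> cspan S"
  shows "x \<in> cvs.span S"
proof -
  obtain c where x: "x = (\<lambda>n. \<Sum>s\<in>S. c s * s n)" using assms by (auto simp: cspan_def)
  have "x = (\<Sum>s\<in>S. cscale (c s) s)"
    by (rule ext) (simp add: x sum_fun_apply cscale_def)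
  also have "\<dots> \<in> cvs.span S"
    by (intro cvs.span_sum cvs.span_scale cvs.span_base)
  finally show ?thesis .
qed

lemma cspan_lin:
  assumes "x \<in> cspan S" "y \<in> cspan S"
  shows "(\<lambda>n. a * (x n - y n)) \<in> cspan S"
proof -
  obtain c where x: "x = (\<lambda>n. \<Sum>s\<in>S. c s * s n)" using assms by (auto simp: cspan_def)
  obtain d where y: "y = (\<lambda>n. \<Sum>s\<in>S. d s * s n)" using assms by (auto simp: cspan_def)
  have "(\<lambda>n. a * (x n - y n)) = (\<lambda>n. \<Sum>s\<in>S. (a * (c s - d s)) * s n)"
    by (rule ext) (simp add: x y sum_distrib_left sum_subtractf[symmetric] algebra_simps)
  thus ?thesis by (auto simp: cspan_def)
qed

lemma cspan_base:
  assumes "finite S" "s \<in> S"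
  shows "s \<in> cspan S"
proof -
  have "(\<lambda>n. \<Sum>t\<in>S. (if t = s then 1 else 0) * t n) = (\<lambda>n. \<Sum>t\<in>S. if t = s then s n else 0)"
    by (intro ext sum.cong) auto
  also have "\<dots> = s" using assms by simp
  finally have "s = (\<lambda>n. \<Sum>t\<in>S. (if t = s then 1 else 0) * t n)" by simp
  thus ?thesis unfolding cspan_def by (intro CollectI exI[of _ "\<lambda>t. if t = s then 1 else 0"])
qed

lemma no_fd: "\<not> has_fd_subrep SymZ_rtimes_Z rep"
proof
  assume "has_fd_subrep SymZ_rtimes_Z rep"
  then obtain S f where fin: "finite S" and Sl2: "S \<subseteq> l2" and fS: "f \<in> S"
    and f0: "f \<noteq> (\<lambda>n. 0)"
    and inv: "\<And>g x. g \<in> carrier SymZ_rtimes_Z \<Longrightarrow> x \<in> cspan S \<Longrightarrow> rep g x \<in> cspan S"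
    unfolding has_fd_subrep_def by blast
  obtain n0 where n0: "f n0 \<noteq> 0" using f0 by auto
  have fl2: "f \<in> l2" using fS Sl2 by auto
  have fc: "f \<in> cspan S" by (rule cspan_base[OF fin fS])
  define Q where "Q = {n. f n = f n0}"
  have "finite Q"
  proof -
    have "(\<lambda>n. (cmod (f n))\<^sup>2) \<longlonglongrightarrow> 0"
      by (rule summable_LIMSEQ_zero) (use fl2 in \<open>simp add: l2_def\<close>)
    moreover have "(cmod (f n0))\<^sup>2 > 0" using n0 by simp
    ultimately have "eventually (\<lambda>n. (cmod (f n))\<^sup>2 < (cmod (f n0))\<^sup>2) sequentially"
      by (rule order_tendstoD(2))
    then obtain N where N: "\<And>n. n \<ge> N \<Longrightarrow> (cmod (f n))\<^sup>2 < (cmod (f n0))\<^sup>2"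
      by (auto simp: eventually_sequentially)
    have "Q \<subseteq> {..<N}"
    proof
      fix n assume "n \<in> Q"
      hence "f n = f n0" by (simp add: Q_def)
      thus "n \<in> {..<N}" using N[of n] by (cases "n \<ge> N") auto
    qed
    thus ?thesis by (rule finite_subset) simp
  qed
  have n0Q: "n0 \<in> Q" by (simp add: Q_def)
  define e where "e k = (\<lambda>n. if n = n0 then 1 else if n = k then -1 else (0::complex))" for k
  have eS: "e k \<in> cspan S" if k: "k \<notin> Q" for k
  proof -
    have kn0: "k \<noteq> n0" using k n0Q by auto
    have fk: "f k \<noteq> f n0" using k by (simp add: Q_def)
    define g1 where "g1 = (sw (int_decode n0) (int_decode k), (0::int))"
    have g1c: "g1 \<in> carrier SymZ_rtimes_Z" unfolding g1_def by (rule sw_carrier)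
    have P: "Pm g1 n = (if n = n0 then k else if n = k then n0 else n)" for n
      using kn0 by (auto simp: Pm_def ainv_def g1_def inv_sw sw_def int_decode_eq)
    have "e k = (\<lambda>n. (1 / (f k - f n0)) * (rep g1 f n - f n))"
    proof
      fix n
      show "e k n = (1 / (f k - f n0)) * (rep g1 f n - f n)"
        using fk kn0 by (auto simp: e_def rep_def P field_simps)
    qed
    also have "\<dots> \<in> cspan S" by (rule cspan_lin[OF inv[OF g1c fc] fc])
    finally show ?thesis .
  qed
  define T where "T = e ` (UNIV - Q)"
  have TS: "T \<subseteq> cvs.span S" unfolding T_def using eS cspan_sub_span by blast
  have ek: "e j k = (if k = j then -1 else 0)" if "k \<notin> Q" for j k
    using that n0Q by (auto simp: e_def)
  have ind: "cvs.independent T"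
    unfolding cvs.independent_explicit_module
  proof (intro allI impI)
    fix t u v assume t: "finite t" "t \<subseteq> T" and sum0: "(\<Sum>v\<in>t. cscale (u v) v) = 0" and vt: "v \<in> t"
    obtain k where k: "k \<notin> Q" and ve: "v = e k" using vt t(2) unfolding T_def by blast
    have "0 = (\<Sum>w\<in>t. cscale (u w) w) k" using sum0 by (simp add: zero_fun_def)
    also have "\<dots> = (\<Sum>w\<in>t. u w * w k)" by (simp add: sum_fun_apply cscale_def)
    also have "\<dots> = u v * v k + (\<Sum>w\<in>t - {v}. u w * w k)"
      using t(1) vt by (simp add: sum.remove)
    also have "(\<Sum>w\<in>t - {v}. u w * w k) = 0"
    proof (rule sum.neutral, rule ballI)
      fix w assume w: "w \<in> t - {v}"
      then obtain j where j: "w = e j" using t(2) unfolding T_def by blast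
      have "j \<noteq> k" using w ve j by auto
      thus "u w * w k = 0" using j ek[OF k] by simp
    qed
    finally show "u v = 0" using ve ek[OF k, of k] by simp
  qed
  have "finite T" using cvs.independent_span_bound[OF fin ind TS] by simp
  moreover have "inj_on e (UNIV - Q)"
  proof (rule inj_onI)
    fix a b assume a: "a \<in> UNIV - Q" and b: "b \<in> UNIV - Q" and eq: "e a = e b"
    have "e a a = e b a" using eq by simp
    thus "a = b" using ek[of a a] ek[of a b] a by (auto split: if_splits)
  qed
  ultimately have "finite (UNIV - Q)" unfolding T_def by (simp add: finite_image_iff)
  thus False using \<open>finite Q\<close> by (simp add: Diff_infinite_finite)
qed

theorem proposition4p4:
  shows "\<not> has_HFD_l2 SymZ_rtimes_Z"
  unfolding has_HFD_l2_def reduced_H1_nonzero_def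
  using unitary_rep_rep bco_cocycle not_closure no_fd by blast

end
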